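(* Let $n\ge 1$, $1\le k\le n$, and let $\omega_k$ be the $k$-th fundamental weight of $\mathfrak{sp}_{2n}(\mathbb C)$. Then the symplectic FFLV basis $\{f^{\mathsf p}\nu_{\omega_k} : \mathsf p\in S(\omega_k)\}$ of $V_{\omega_k}$ is in a weight preserving one-to-one correspondence with the set of single column symplectic PBW tableaux of length $k$.
   Context: Notation for $\mathfrak{sp}_{2n}$: $\varepsilon_1,\dots,\varepsilon_n$ is the standard basis of $\mathfrak h^*$, simple roots $\alpha_i=\varepsilon_i-\varepsilon_{i+1}$ ($i<n$), $\alpha_n=2\varepsilon_n$, fundamental weights $\omega_k=\varepsilon_1+\dots+\varepsilon_k$. For $1\le j\le n$ put $\bar j:=2n+1-j$. Let $\mathsf J=\{1<2<\dots<n<\overline{n-1}<\dots<\bar 1\}$; for $x\in\mathsf J$, $x+1$ denotes the successor of $x$ in $\mathsf J$. The positive roots are $\alpha_{i,j}=\alpha_i+\dots+\alpha_j=\varepsilon_i-\varepsilon_{j+1}$ for $1\le i\le j<n$, $\alpha_{i,n}=\alpha_i+\dots+\alpha_n=\varepsilon_i+\varepsilon_n$, and $\alpha_{i,\bar j}=\alpha_i+\dots+\alpha_n+\alpha_{n-1}+\dots+\alpha_j=\varepsilon_i+\varepsilon_j$ for $1\le i\le j\le n$ (with $\alpha_{i,\bar n}=\alpha_{i,n}$); write $\alpha_{\bar j}=\alpha_{j,\bar j}$. For each positive root $\alpha$ fix a nonzero root vector $f_\alpha\in\mathfrak n^-_{-\alpha}$, and write $f_{p,q}=f_{\alpha_{p,q}}$.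 A symplectic Dyck path is a sequence $\mathsf d=(\mathsf d(0),\dots,\mathsf d(s))$, $s\ge 0$, of positive roots such that $\mathsf d(0)=\alpha_i$ is simple, $\mathsf d(s)=\alpha_j$ or $\mathsf d(s)=\alpha_{\bar j}$ for some $j$, and if $\mathsf d(r)=\alpha_{p,q}$ ($p,q\in\mathsf J$) then $\mathsf d(r+1)\in\{\alpha_{p,q+1},\alpha_{p+1,q}\}$. For a dominant integral weight $\lambda=\sum_k m_k\omega_k$, the FFLV polytope $P(\lambda)\subset\mathbb R_{\ge0}^{n^2}$ consists of the points $(\mathsf p_\alpha)_{\alpha>0}$ with $\mathsf p_\alpha\ge 0$ such that for every Dyck path $\mathsf d$ with $\mathsf d(0)=\alpha_i$: $\sum_r \mathsf p_{\mathsf d(r)}\le m_i+\dots+m_j$ if $\mathsf d(s)=\alpha_j$, and $\sum_r \mathsf p_{\mathsf d(r)}\le m_i+\dots+m_n$ if $\mathsf d(s)=\alpha_{\bar j}$. $S(\lambda)$ is the set of integral points of $P(\lambda)$, and $f^{\mathsf p}=\prod_\alpha f_\alpha^{\mathsf p_\alpha}$ (product in a fixed order of root vectors). It is known (Feigin–Fourier–Littelmann) that $\{f^{\mathsf p}\nu_\lambda:\mathsf p\in S(\lambda)\}$ is a basis of the irreducible module $V_\lambda$ with highest weight vector $\nu_\lambda$ (the symplectic FFLV basis); the weight of $f^{\mathsf p}\nu_\lambda$ is $\lambda-\sum_\alpha \mathsf p_\alpha\alpha$. Let $\mathcal N=\{1<\dots<n<\bar n<\dots<\bar 1\}$. A single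 column symplectic PBW tableau of length $k$ is a column of $k$ boxes filled with entries $T_1,\dots,T_k\in\mathcal N$ (top to bottom) such that: (i) if $T_i\le k$ then $T_i=i$; (ii) if $i_1<i_2$ and $T_{i_1}\ne i_1$ then $T_{i_1}>T_{i_2}$; (iii) if $T_i=i$ and $T_{i'}=\bar i$ for some $i'$, then $i'<i$, whenever $i<k$. Its weight is $\sum_{i\in\{1,\dots,n\},\, i\text{ appears}}\varepsilon_i-\sum_{j\in\{1,\dots,n\},\,\bar j\text{ appears}}\varepsilon_j$. *)

theory Defs
  imports Complex_Main
begin

text \<open>Elements of the ordered alphabet
  J = {1 < ... < n < bar(n-1) < ... < bar 1} and N = {1 < ... < n < bar n < ... < bar 1}
  are encoded as natural numbers, with bar j := 2n+1-j; the orders are the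
  orders of nat.  Weights are functions nat => int supported on {1..n}
  (coordinates w.r.t. eps_1, ..., eps_n).\<close>

definition sbar :: "nat \<Rightarrow> nat \<Rightarrow> nat" where
  "sbar n j = 2 * n + 1 - j"

definition Jset :: "nat \<Rightarrow> nat set" where
  "Jset n = {1..n} \<union> {sbar n j | j. 1 \<le> j \<and> j < n}"

definition succJ :: "nat \<Rightarrow> nat \<Rightarrow> nat" where
  "succJ n x = (if x = n then sbar n (n - 1) else x + 1)"

text \<open>Positive roots alpha_{p,q}, p in {1..n}, q in J: p \<le> q \<le> n, or q = bar j with p \<le> j < n
  (alpha_{p, bar n} is identified with alpha_{p,n}).\<close>
definition posroots :: "nat \<Rightarrow> (nat \<times> nat) set" where
  "posroots n = {(p, q). 1 \<le> p \<and> p \<le> q \<and> q \<le> n}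
              \<union> {(p, sbar n j) | p j. 1 \<le> p \<and> p \<le> j \<and> j < n}"

definition eps :: "nat \<Rightarrow> nat \<Rightarrow> int" where
  "eps i = (\<lambda>l. if l = i then 1 else 0)"

definition rootvec :: "nat \<Rightarrow> nat \<times> nat \<Rightarrow> nat \<Rightarrow> int" where
  "rootvec n a = (case a of (p, q) \<Rightarrow>
     if q < n then (\<lambda>l. eps p l - eps (q + 1) l)
     else if q = n then (\<lambda>l. eps p l + eps n l)
     else (\<lambda>l. eps p l + eps (sbar n q) l))"

text \<open>Symplectic Dyck paths, as nonempty lists d = [d(0), ..., d(s)] of positive roots.\<close>
definition dyck_path :: "nat \<Rightarrow> (nat \<times> nat) list \<Rightarrow> bool" where
  "dyck_path n d \<longleftrightarrow> d \<noteq> [] \<and> set d \<subseteq> posroots n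
     \<and> fst (hd d) = snd (hd d)
     \<and> (snd (last d) = fst (last d) \<or> snd (last d) = sbar n (fst (last d)))
     \<and> (\<forall>r. Suc r < length d \<longrightarrow>
          (case d ! r of (p, q) \<Rightarrow> d ! Suc r = (p, succJ n q) \<or> d ! Suc r = (succJ n p, q)))"

text \<open>Right-hand side of the Dyck path inequality for lambda = sum_k m_k omega_k:
  m_i + ... + m_j if d(s) = alpha_j, and m_i + ... + m_n if d(s) = alpha_{bar j}.\<close>
definition dyck_bound :: "nat \<Rightarrow> (nat \<Rightarrow> nat) \<Rightarrow> (nat \<times> nat) list \<Rightarrow> nat" where
  "dyck_bound n m d =
     (let i = fst (hd d); j = fst (last d) in
       if snd (last d) = j then (\<Sum>t = i..j. m t) else (\<Sum>t = i..n. m t))"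

text \<open>The FFLV polytope P(lambda) in R_{\<ge>0}^{n^2}: points are real functions on the
  positive roots (extended by zero outside).\<close>
definition fflv_polytope :: "nat \<Rightarrow> (nat \<Rightarrow> nat) \<Rightarrow> (nat \<times> nat \<Rightarrow> real) set" where
  "fflv_polytope n m = {x. (\<forall>a. a \<notin> posroots n \<longrightarrow> x a = 0)
      \<and> (\<forall>a \<in> posroots n. x a \<ge> 0)
      \<and> (\<forall>d. dyck_path n d \<longrightarrow> sum_list (map x d) \<le> real (dyck_bound n m d))}"

definition fflv_S :: "nat \<Rightarrow> (nat \<Rightarrow> nat) \<Rightarrow> (nat \<times> nat \<Rightarrow> int) set" where
  "fflv_S n m = {p. (\<lambda>a. real_of_int (p a)) \<in> fflv_polytope n m}"

text \<open>lambda = sum_k m_k omega_k in eps-coordinates.\<close>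
definition hw :: "nat \<Rightarrow> (nat \<Rightarrow> nat) \<Rightarrow> nat \<Rightarrow> int" where
  "hw n m l = (if 1 \<le> l \<and> l \<le> n then (\<Sum>t = l..n. int (m t)) else 0)"

definition fflv_weight :: "nat \<Rightarrow> (nat \<Rightarrow> nat) \<Rightarrow> (nat \<times> nat \<Rightarrow> int) \<Rightarrow> nat \<Rightarrow> int" where
  "fflv_weight n m p = (\<lambda>l. hw n m l - (\<Sum>a \<in> posroots n. p a * rootvec n a l))"

text \<open>The k-th fundamental weight omega_k, as coefficient vector m.\<close>
definition omega :: "nat \<Rightarrow> nat \<Rightarrow> nat" where
  "omega k = (\<lambda>t. if t = k then 1 else 0)"

text \<open>Single column symplectic PBW tableaux of length k: lists T with T ! (i-1) = T_i.\<close>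
definition pbw_column :: "nat \<Rightarrow> nat \<Rightarrow> nat list \<Rightarrow> bool" where
  "pbw_column n k T \<longleftrightarrow> length T = k
     \<and> (\<forall>i \<in> {1..k}. T ! (i - 1) \<in> {1..2 * n})
     \<and> (\<forall>i \<in> {1..k}. T ! (i - 1) \<le> k \<longrightarrow> T ! (i - 1) = i)
     \<and> (\<forall>i1 \<in> {1..k}. \<forall>i2 \<in> {1..k}. i1 < i2 \<and> T ! (i1 - 1) \<noteq> i1 \<longrightarrow> T ! (i1 - 1) > T ! (i2 - 1))
     \<and> (\<forall>i \<in> {1..k}. \<forall>i' \<in> {1..k}. i < k \<and> T ! (i - 1) = i \<and> T ! (i' - 1) = sbar n i \<longrightarrow> i' < i)"

definition pbw_columns :: "nat \<Rightarrow> nat \<Rightarrow> nat list set" where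
  "pbw_columns n k = {T. pbw_column n k T}"

definition tableau_weight :: "nat \<Rightarrow> nat list \<Rightarrow> nat \<Rightarrow> int" where
  "tableau_weight n T = (\<lambda>l. if 1 \<le> l \<and> l \<le> n then
       (if l \<in> set T then 1 else 0) - (if sbar n l \<in> set T then 1 else 0) else 0)"

end

theory Submission
  imports Defs
begin

definition RR :: "nat \<Rightarrow> nat \<Rightarrow> nat" where "RR n q = (if q \<le> n then q + 1 else q)"
definition QQ :: "nat \<Rightarrow> nat \<Rightarrow> nat" where "QQ n r = (if r \<le> n + 1 then r - 1 else r)"
definition Reg :: "nat \<Rightarrow> (nat \<times> nat) set" where
  "Reg n = {(p, r). 1 \<le> p \<and> p < r \<and> r + p \<le> 2 * n + 1}"
definition stepr :: "nat \<times> nat \<Rightarrow> nat \<times> nat \<Rightarrow> bool" where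
  "stepr x y \<longleftrightarrow> y = (fst x, snd x + 1) \<or> y = (fst x + 1, snd x)"
definition Psi :: "nat \<Rightarrow> nat \<times> nat \<Rightarrow> nat \<times> nat" where
  "Psi n x = (fst x, QQ n (snd x))"
definition stepq :: "nat \<Rightarrow> nat \<times> nat \<Rightarrow> nat \<times> nat \<Rightarrow> bool" where
  "stepq n x y \<longleftrightarrow> (case x of (p, q) \<Rightarrow> y = (p, succJ n q) \<or> y = (succJ n p, q))"

lemma successively_nth:
  "successively P xs \<longleftrightarrow> (\<forall>r. Suc r < length xs \<longrightarrow> P (xs ! r) (xs ! Suc r))"
proof (induction P xs rule: successively.induct)
  case (3 P x y xs)
  show ?case
    apply (simp add: 3)
    apply (rule iffI)
     apply (auto simp: nth_Cons split: nat.splits)[1]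
    apply (intro conjI)
     apply (metis Suc_less_eq length_Cons nth_Cons_0 nth_Cons_Suc zero_less_Suc)
    by (metis Suc_less_eq length_Cons nth_Cons_Suc)
qed auto

lemma posroots_iff:
  "(p, q) \<in> posroots n \<longleftrightarrow> 1 \<le> p \<and> p \<le> q \<and> q \<noteq> n + 1 \<and> RR n q + p \<le> 2 * n + 1"
  unfolding posroots_def RR_def sbar_def
  apply (cases "q \<le> n")
   apply auto[1]
  apply (rule iffI)
   apply auto[1]
  apply (rule UnI2)
  apply simp
  apply (rule exI[of _ "2 * n + 1 - q"])
  by auto

lemma finite_posroots: "finite (posroots n)"
proof -
  have "posroots n \<subseteq> {0..2*n+1} \<times> {0..2*n+1}"
    by (auto simp: posroots_iff RR_def split: if_splits)
  then show ?thesis by (rule finite_subset) auto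
qed

lemma Psi_in: "x \<in> Reg n \<Longrightarrow> Psi n x \<in> posroots n"
  by (cases x) (auto simp: Reg_def Psi_def posroots_iff QQ_def RR_def)

lemma RR_Psi: "x \<in> Reg n \<Longrightarrow> RR n (snd (Psi n x)) = snd x"
  by (cases x) (auto simp: Reg_def Psi_def QQ_def RR_def)

lemma Psi_RR: "(p, q) \<in> posroots n \<Longrightarrow> Psi n (p, RR n q) = (p, q)"
  by (auto simp: posroots_iff Psi_def QQ_def RR_def)

lemma RR_in: "(p, q) \<in> posroots n \<Longrightarrow> (p, RR n q) \<in> Reg n"
  by (auto simp: posroots_iff Reg_def RR_def)

lemma RR_mono: "q \<le> q' \<Longrightarrow> RR n q \<le> RR n q'"
  by (auto simp: RR_def)

lemma RR_less_iff: "q \<noteq> n + 1 \<Longrightarrow> q' \<noteq> n + 1 \<Longrightarrow> RR n q < RR n q' \<longleftrightarrow> q < q'"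
  by (auto simp: RR_def)

lemma RR_inj: "q \<noteq> n + 1 \<Longrightarrow> q' \<noteq> n + 1 \<Longrightarrow> RR n q = RR n q' \<longleftrightarrow> q = q'"
  by (auto simp: RR_def)

lemma succJ_gt: "1 \<le> n \<Longrightarrow> succJ n x > x"
  by (auto simp: succJ_def sbar_def)

lemma step_Psi:
  assumes "1 \<le> n" "x \<in> Reg n" "y \<in> Reg n" "stepr x y"
  shows "stepq n (Psi n x) (Psi n y)"
  using assms
  by (cases x; cases y) (auto simp: stepr_def stepq_def Psi_def Reg_def QQ_def succJ_def sbar_def)


lemma chain_exists:
  assumes "a \<in> Reg n" "b \<in> Reg n" "fst a \<le> fst b" "snd a \<le> snd b"
  shows "\<exists>e. e \<noteq> [] \<and> hd e = a \<and> last e = b \<and> successively stepr e \<and> set e \<subseteq> Reg n"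
  using assms
proof (induction "(fst b - fst a) + (snd b - snd a)" arbitrary: a rule: less_induct)
  case less
  show ?case
  proof (cases "a = b")
    case True
    then show ?thesis using less.prems by (intro exI[of _ "[a]"]) auto
  next
    case False
    define a' where "a' = (if snd a < snd b then (fst a, snd a + 1) else (fst a + 1, snd a))"
    have st: "stepr a a'" unfolding a'_def stepr_def by auto
    have a'R: "a' \<in> Reg n" "fst a' \<le> fst b" "snd a' \<le> snd b"
      using less.prems False unfolding a'_def Reg_def
      by (cases a; cases b; auto split: if_splits)+
    have lt: "(fst b - fst a') + (snd b - snd a') < (fst b - fst a) + (snd b - snd a)"
      using less.prems False unfolding a'_def
      by (cases a; cases b; auto split: if_splits)
    obtain e where e: "e \<noteq> []" "hd e = a'" "last e = b" "successively stepr e" "set e \<subseteq> Reg n"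
      using less.hyps[OF lt a'R(1) less.prems(2) a'R(2,3)] by blast
    show ?thesis
      apply (rule exI[of _ "a # e"])
      using e st less.prems by (auto simp: successively_Cons)
  qed
qed

lemma chain_trans:
  assumes "e1 \<noteq> []" "hd e1 = a" "last e1 = b" "successively stepr e1" "set e1 \<subseteq> Reg n"
    and "e2 \<noteq> []" "hd e2 = b" "last e2 = c" "successively stepr e2" "set e2 \<subseteq> Reg n"
  shows "\<exists>e. e \<noteq> [] \<and> hd e = a \<and> last e = c \<and> successively stepr e \<and> set e \<subseteq> Reg n
           \<and> set e1 \<subseteq> set e \<and> set e2 \<subseteq> set e"
proof -
  obtain t where t: "e2 = b # t" using assms(6,7) by (cases e2) auto
  show ?thesis
  proof (rule exI[of _ "e1 @ t"], intro conjI)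
    show "last (e1 @ t) = c" using assms t by (cases "t = []") auto
    show "successively stepr (e1 @ t)"
      using assms t by (auto simp: successively_append_iff successively_Cons)
    show "set e2 \<subseteq> set (e1 @ t)" using t assms(1,3) by auto
  qed (use assms t in auto)
qed

lemma dyck_Psi:
  assumes n: "1 \<le> n" and e: "e \<noteq> []" "successively stepr e" "set e \<subseteq> Reg n"
    and hd: "hd e = (i, i + 1)"
    and lst: "last e = (j, j + 1) \<or> last e = (j, 2 * n + 1 - j)"
  shows "dyck_path n (map (Psi n) e)"
  unfolding dyck_path_def
proof (intro conjI)
  show "map (Psi n) e \<noteq> []" using e by simp
  show "set (map (Psi n) e) \<subseteq> posroots n" using e Psi_in by auto
  have hR: "hd e \<in> Reg n" using e by auto
  then show "fst (hd (map (Psi n) e)) = snd (hd (map (Psi n) e))"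
    using e hd by (auto simp: hd_map Psi_def QQ_def Reg_def)
  have lR: "last e \<in> Reg n" using e by auto
  then show "snd (last (map (Psi n) e)) = fst (last (map (Psi n) e)) \<or>
    snd (last (map (Psi n) e)) = sbar n (fst (last (map (Psi n) e)))"
    using e lst by (auto simp: last_map Psi_def QQ_def Reg_def sbar_def)
  have "successively (stepq n) (map (Psi n) e)"
    unfolding successively_map
    using e(2) by (rule successively_mono) (use step_Psi[OF n] e(3) in blast)
  then show "\<forall>r. Suc r < length (map (Psi n) e) \<longrightarrow>
        (case map (Psi n) e ! r of (p, q) \<Rightarrow>
            map (Psi n) e ! Suc r = (p, succJ n q) \<or> map (Psi n) e ! Suc r = (succJ n p, q))"
    unfolding successively_nth stepq_def by simp
qed

lemma sum_omega: "(\<Sum>t = i..j. omega k t) = (if i \<le> k \<and> k \<le> j then 1 else 0)"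
  unfolding omega_def by (simp add: sum.delta')

lemma bound_diag:
  assumes "e \<noteq> []" "set e \<subseteq> Reg n" "hd e = (i, i + 1)" "last e = (j, j + 1)"
  shows "dyck_bound n (omega k) (map (Psi n) e) = (if i \<le> k \<and> k \<le> j then 1 else 0)"
proof -
  have "last e \<in> Reg n" using assms(1,2) last_in_set by blast
  then show ?thesis using assms
    by (auto simp: dyck_bound_def Let_def hd_map last_map Psi_def QQ_def Reg_def sum_omega)
qed

lemma bound_anti:
  assumes "e \<noteq> []" "set e \<subseteq> Reg n" "hd e = (i, i + 1)" "last e = (j, 2 * n + 1 - j)" "k \<le> n"
  shows "dyck_bound n (omega k) (map (Psi n) e) = (if i \<le> k then 1 else 0)"
proof -
  have "last e \<in> Reg n" using assms(1,2) last_in_set by blast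
  then show ?thesis using assms
    by (auto simp: dyck_bound_def Let_def hd_map last_map Psi_def QQ_def Reg_def sum_omega)
qed


lemma dyck_step:
  assumes "dyck_path n d" "1 \<le> n" "Suc r < length d"
  shows "fst (d ! r) \<le> fst (d ! Suc r) \<and> snd (d ! r) \<le> snd (d ! Suc r)
    \<and> fst (d ! r) + snd (d ! r) < fst (d ! Suc r) + snd (d ! Suc r)"
proof -
  obtain p q where pq: "d ! r = (p, q)" by fastforce
  have "d ! Suc r = (p, succJ n q) \<or> d ! Suc r = (succJ n p, q)"
    using assms pq unfolding dyck_path_def by fastforce
  then show ?thesis using pq succJ_gt[OF assms(2), of p] succJ_gt[OF assms(2), of q] by auto
qed

lemma dyck_mono:
  assumes "dyck_path n d" "1 \<le> n" "i \<le> j" "j < length d"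
  shows "fst (d ! i) \<le> fst (d ! j) \<and> snd (d ! i) \<le> snd (d ! j)
    \<and> (i < j \<longrightarrow> fst (d ! i) + snd (d ! i) < fst (d ! j) + snd (d ! j))"
  using assms(3,4)
proof (induction j)
  case 0
  then show ?case by simp
next
  case (Suc j)
  show ?case
  proof (cases "i = Suc j")
    case True
    then show ?thesis by simp
  next
    case False
    then have "i \<le> j" using Suc by simp
    with Suc have ih: "fst (d ! i) \<le> fst (d ! j) \<and> snd (d ! i) \<le> snd (d ! j)
      \<and> (i < j \<longrightarrow> fst (d ! i) + snd (d ! i) < fst (d ! j) + snd (d ! j))" by simp
    have "fst (d ! j) \<le> fst (d ! Suc j) \<and> snd (d ! j) \<le> snd (d ! Suc j)
    \<and> fst (d ! j) + snd (d ! j) < fst (d ! Suc j) + snd (d ! Suc j)"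
      using dyck_step[OF assms(1,2) Suc.prems(2)] .
    then show ?thesis using ih by auto
  qed
qed

lemma dyck_distinct:
  assumes "dyck_path n d" "1 \<le> n"
  shows "distinct d"
  unfolding distinct_conv_nth
proof (intro allI impI)
  fix i j assume "i < length d" "j < length d" "i \<noteq> j"
  then show "d ! i \<noteq> d ! j"
    using dyck_mono[OF assms, of i j] dyck_mono[OF assms, of j i]
    by (cases "i < j") auto
qed

lemma dyck_comparable:
  assumes "dyck_path n d" "1 \<le> n" "a \<in> set d" "b \<in> set d"
  shows "(fst a \<le> fst b \<and> snd a \<le> snd b) \<or> (fst b \<le> fst a \<and> snd b \<le> snd a)"
proof -
  obtain i j where "i < length d" "j < length d" "a = d ! i" "b = d ! j"
    using assms by (metis in_set_conv_nth)
  then show ?thesis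
    using dyck_mono[OF assms(1,2), of i j] dyck_mono[OF assms(1,2), of j i]
    by (cases "i \<le> j") auto
qed

lemma dyck_bounds:
  assumes "dyck_path n d" "1 \<le> n" "a \<in> set d"
  shows "fst (hd d) \<le> fst a \<and> snd a \<le> snd (last d)"
proof -
  obtain i where i: "i < length d" "a = d ! i"
    using assms by (metis in_set_conv_nth)
  have ne: "d \<noteq> []" using assms unfolding dyck_path_def by auto
  have "hd d = d ! 0" using ne by (simp add: hd_conv_nth)
  moreover have "last d = d ! (length d - 1)" using ne by (simp add: last_conv_nth)
  ultimately show ?thesis
    using dyck_mono[OF assms(1,2), of 0 i] dyck_mono[OF assms(1,2), of i "length d - 1"] i
    by auto
qed

definition Gs :: "nat \<Rightarrow> nat \<Rightarrow> (nat \<times> nat) set" where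
  "Gs n k = {a \<in> posroots n. fst a \<le> k \<and> k \<le> snd a}"

definition good :: "nat \<Rightarrow> nat \<Rightarrow> (nat \<times> nat \<Rightarrow> int) \<Rightarrow> bool" where
  "good n k p \<longleftrightarrow> (\<forall>a. a \<notin> Gs n k \<longrightarrow> p a = 0) \<and> (\<forall>a. p a = 0 \<or> p a = 1)
     \<and> (\<forall>a b. p a = 1 \<longrightarrow> p b = 1 \<longrightarrow> a \<noteq> b \<longrightarrow> fst a \<le> fst b \<longrightarrow> snd a \<le> snd b \<longrightarrow> False)"

lemma good_in_S:
  assumes n: "1 \<le> n" "k \<le> n" and g: "good n k p"
  shows "p \<in> fflv_S n (omega k)"
  unfolding fflv_S_def fflv_polytope_def
proof (intro CollectI conjI allI ballI impI)
  fix a assume "a \<notin> posroots n"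
  then have "a \<notin> Gs n k" unfolding Gs_def by auto
  then show "real_of_int (p a) = 0" using g unfolding good_def by (metis of_int_0)
next
  fix a have "p a = 0 \<or> p a = 1" using g unfolding good_def by blast
  then show "0 \<le> real_of_int (p a)" by auto
next
  fix d assume d: "dyck_path n d"
  let ?x = "\<lambda>a. real_of_int (p a)"
  have dist: "distinct d" using dyck_distinct[OF d n(1)] .
  define S1 where "S1 = set d \<inter> {a. p a = 1}"
  have "sum_list (map ?x d) = sum ?x (set d)" using dist by (simp add: sum_list_distinct_conv_sum_set)
  also have "\<dots> = sum ?x S1"
    apply (rule sum.mono_neutral_right)
    using g unfolding S1_def good_def by auto
  also have "\<dots> = real (card S1)" unfolding S1_def by simp
  finally have eq: "sum_list (map ?x d) = real (card S1)" .
  have c1: "card S1 \<le> 1"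
  proof -
    have "\<forall>a\<in>S1. \<forall>b\<in>S1. a = b"
    proof (intro ballI)
      fix a b assume ab: "a \<in> S1" "b \<in> S1"
      show "a = b"
      proof (rule ccontr)
        assume "a \<noteq> b"
        have anti: "\<And>a b. p a = 1 \<Longrightarrow> p b = 1 \<Longrightarrow> a \<noteq> b \<Longrightarrow> fst a \<le> fst b \<Longrightarrow> snd a \<le> snd b \<Longrightarrow> False"
          using g unfolding good_def by blast
        have "a \<in> set d" "b \<in> set d" "p a = 1" "p b = 1" using ab unfolding S1_def by auto
        then show False using anti dyck_comparable[OF d n(1), of a b] \<open>a \<noteq> b\<close> by metis
      qed
    qed
    then show ?thesis using card_le_Suc0_iff_eq[of S1] unfolding S1_def by auto
  qed
  have SG: "S1 \<subseteq> Gs n k" using g unfolding S1_def good_def by fastforce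
  define i where "i = fst (hd d)"
  define j where "j = fst (last d)"
  have bd: "dyck_bound n (omega k) d = (if snd (last d) = j then (if i \<le> k \<and> k \<le> j then 1 else 0)
      else (if i \<le> k then 1 else 0))"
    unfolding dyck_bound_def Let_def i_def j_def sum_omega using n by auto
  show "sum_list (map ?x d) \<le> real (dyck_bound n (omega k) d)"
  proof (cases "dyck_bound n (omega k) d = 1")
    case True
    then show ?thesis using eq c1 by simp
  next
    case False
    have "S1 = {}"
    proof (rule ccontr)
      assume "S1 \<noteq> {}"
      then obtain a where a: "a \<in> S1" by auto
      then have aG: "a \<in> Gs n k" and ad: "a \<in> set d" using SG S1_def by auto
      have "i \<le> fst a" "snd a \<le> snd (last d)" using dyck_bounds[OF d n(1) ad] i_def by auto
      moreover have "fst a \<le> k" "k \<le> snd a" using aG unfolding Gs_def by auto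
      ultimately show False using False bd by (auto split: if_splits)
    qed
    then show ?thesis using eq by simp
  qed
qed


lemma path3:
  assumes "u \<in> Reg n" "v1 \<in> Reg n" "v2 \<in> Reg n" "w \<in> Reg n"
    "fst u \<le> fst v1" "snd u \<le> snd v1" "fst v1 \<le> fst v2" "snd v1 \<le> snd v2"
    "fst v2 \<le> fst w" "snd v2 \<le> snd w"
  shows "\<exists>e. e \<noteq> [] \<and> hd e = u \<and> last e = w \<and> successively stepr e \<and> set e \<subseteq> Reg n
     \<and> v1 \<in> set e \<and> v2 \<in> set e"
proof -
  obtain e1 where e1: "e1 \<noteq> []" "hd e1 = u" "last e1 = v1" "successively stepr e1" "set e1 \<subseteq> Reg n"
    using chain_exists[of u n v1] assms by blast
  obtain e2 where e2: "e2 \<noteq> []" "hd e2 = v1" "last e2 = v2" "successively stepr e2" "set e2 \<subseteq> Reg n"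
    using chain_exists[of v1 n v2] assms by blast
  obtain e3 where e3: "e3 \<noteq> []" "hd e3 = v2" "last e3 = w" "successively stepr e3" "set e3 \<subseteq> Reg n"
    using chain_exists[of v2 n w] assms by blast
  obtain e4 where e4: "e4 \<noteq> []" "hd e4 = u" "last e4 = v2" "successively stepr e4" "set e4 \<subseteq> Reg n"
    "set e1 \<subseteq> set e4" "set e2 \<subseteq> set e4"
    using chain_trans[OF e1 e2] by blast
  obtain e5 where e5: "e5 \<noteq> []" "hd e5 = u" "last e5 = w" "successively stepr e5" "set e5 \<subseteq> Reg n"
    "set e4 \<subseteq> set e5" "set e3 \<subseteq> set e5"
    using chain_trans[OF e4(1-5) e3] by blast
  have "v1 \<in> set e1" using e1 last_in_set by metis
  moreover have "v2 \<in> set e3" using e3 hd_in_set by metis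
  ultimately show ?thesis using e5 e4 by (intro exI[of _ e5]) auto
qed

lemma S_basic:
  assumes "p \<in> fflv_S n (omega k)"
  shows "\<And>a. a \<notin> posroots n \<Longrightarrow> p a = 0" "\<And>a. a \<in> posroots n \<Longrightarrow> p a \<ge> 0"
  using assms unfolding fflv_S_def fflv_polytope_def by auto

lemma S_path:
  assumes S: "p \<in> fflv_S n (omega k)" and n: "1 \<le> n"
    and e: "e \<noteq> []" "successively stepr e" "set e \<subseteq> Reg n" "hd e = (i, i + 1)"
    "last e = (j, j + 1) \<or> last e = (j, 2 * n + 1 - j)"
    and A: "A \<subseteq> Psi n ` set e"
  shows "(\<Sum>a\<in>A. real_of_int (p a)) \<le> real (dyck_bound n (omega k) (map (Psi n) e))"
proof -
  let ?x = "\<lambda>a. real_of_int (p a)"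
  have d: "dyck_path n (map (Psi n) e)" using dyck_Psi[OF n e] .
  have "sum ?x A \<le> sum ?x (Psi n ` set e)"
  proof (rule sum_mono2)
    have "\<forall>y\<in>Psi n ` set e. 0 \<le> ?x y" using Psi_in e(3) S_basic(2)[OF S] by fastforce
    then show "0 \<le> ?x b" if "b \<in> Psi n ` set e - A" for b using that by blast
  qed (use A in auto)
  also have "\<dots> = sum_list (map ?x (map (Psi n) e))"
    using sum_list_distinct_conv_sum_set[OF dyck_distinct[OF d n], of ?x] by simp
  also have "\<dots> \<le> real (dyck_bound n (omega k) (map (Psi n) e))"
    using S d unfolding fflv_S_def fflv_polytope_def by auto
  finally show ?thesis .
qed

lemma posroots_Reg_facts:
  assumes "(p, q) \<in> posroots n"
  shows "(p, p + 1) \<in> Reg n" "(p, 2 * n + 1 - p) \<in> Reg n" "p + 1 \<le> RR n q" "RR n q \<le> 2 * n + 1 - p"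
    "p \<le> n"
  using assms by (auto simp: posroots_iff Reg_def RR_def split: if_splits)

lemma S_zero_big:
  assumes S: "p \<in> fflv_S n (omega k)" and n: "1 \<le> n" and a: "(p0, q0) \<in> posroots n" "k < p0"
    and kn: "k \<le> n"
  shows "p (p0, q0) = 0"
proof -
  note f = posroots_Reg_facts[OF a(1)]
  obtain e where e: "e \<noteq> []" "hd e = (p0, p0 + 1)" "last e = (p0, 2 * n + 1 - p0)"
    "successively stepr e" "set e \<subseteq> Reg n" "(p0, RR n q0) \<in> set e"
    using path3[of "(p0, p0 + 1)" n "(p0, RR n q0)" "(p0, RR n q0)" "(p0, 2 * n + 1 - p0)"]
      f RR_in[OF a(1)] by auto
  have "{(p0, q0)} \<subseteq> Psi n ` set e" using e(6) Psi_RR[OF a(1)] by force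
  from S_path[OF S n e(1,4,5,2) _ this] e(3)
  have "real_of_int (p (p0, q0)) \<le> real (dyck_bound n (omega k) (map (Psi n) e))" by auto
  also have "\<dots> = 0" using bound_anti[OF e(1,5,2,3) kn] a(2) by auto
  finally show ?thesis using S_basic(2)[OF S a(1)] by simp
qed


lemma S_zero_small:
  assumes S: "p \<in> fflv_S n (omega k)" and n: "1 \<le> n" and a: "(p0, q0) \<in> posroots n" "q0 < k"
    and kn: "k \<le> n"
  shows "p (p0, q0) = 0"
proof -
  note f = posroots_Reg_facts[OF a(1)]
  have r: "RR n q0 = q0 + 1" using a kn by (simp add: RR_def)
  have w: "(q0, q0 + 1) \<in> Reg n" "p0 \<le> q0" using a kn by (auto simp: Reg_def posroots_iff)
  obtain e where e: "e \<noteq> []" "hd e = (p0, p0 + 1)" "last e = (q0, q0 + 1)"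
    "successively stepr e" "set e \<subseteq> Reg n" "(p0, RR n q0) \<in> set e"
    using path3[of "(p0, p0 + 1)" n "(p0, RR n q0)" "(p0, RR n q0)" "(q0, q0 + 1)"]
      f RR_in[OF a(1)] r w by auto
  have "{(p0, q0)} \<subseteq> Psi n ` set e" using e(6) Psi_RR[OF a(1)] by force
  from S_path[OF S n e(1,4,5,2) _ this] e(3)
  have "real_of_int (p (p0, q0)) \<le> real (dyck_bound n (omega k) (map (Psi n) e))" by auto
  also have "\<dots> = 0" using bound_diag[OF e(1,5,2,3)] a(2) by auto
  finally show ?thesis using S_basic(2)[OF S a(1)] by simp
qed

lemma S_le1:
  assumes S: "p \<in> fflv_S n (omega k)" and n: "1 \<le> n" and a: "(p0, q0) \<in> posroots n"
    and kn: "k \<le> n"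
  shows "p (p0, q0) \<le> 1"
proof -
  note f = posroots_Reg_facts[OF a(1)]
  obtain e where e: "e \<noteq> []" "hd e = (p0, p0 + 1)" "last e = (p0, 2 * n + 1 - p0)"
    "successively stepr e" "set e \<subseteq> Reg n" "(p0, RR n q0) \<in> set e"
    using path3[of "(p0, p0 + 1)" n "(p0, RR n q0)" "(p0, RR n q0)" "(p0, 2 * n + 1 - p0)"]
      f RR_in[OF a(1)] by auto
  have "{(p0, q0)} \<subseteq> Psi n ` set e" using e(6) Psi_RR[OF a(1)] by force
  from S_path[OF S n e(1,4,5,2) _ this] e(3)
  have "real_of_int (p (p0, q0)) \<le> real (dyck_bound n (omega k) (map (Psi n) e))" by auto
  also have "\<dots> \<le> 1" using bound_anti[OF e(1,5,2,3) kn] by auto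
  finally show ?thesis by simp
qed

lemma S_anti:
  assumes S: "p \<in> fflv_S n (omega k)" and n: "1 \<le> n"
    and a: "(p1, q1) \<in> posroots n" and b: "(p2, q2) \<in> posroots n"
    and ne: "(p1, q1) \<noteq> (p2, q2)" and le: "p1 \<le> p2" "q1 \<le> q2"
    and kn: "k \<le> n" and v: "p (p1, q1) = 1" "p (p2, q2) = 1"
  shows False
proof -
  note f = posroots_Reg_facts[OF a] and g = posroots_Reg_facts[OF b]
  have "RR n q1 \<le> RR n q2" using RR_mono le by auto
  then obtain e where e: "e \<noteq> []" "hd e = (p1, p1 + 1)" "last e = (p2, 2 * n + 1 - p2)"
    "successively stepr e" "set e \<subseteq> Reg n" "(p1, RR n q1) \<in> set e" "(p2, RR n q2) \<in> set e"
    using path3[of "(p1, p1 + 1)" n "(p1, RR n q1)" "(p2, RR n q2)" "(p2, 2 * n + 1 - p2)"]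
      f g RR_in[OF a] RR_in[OF b] le by auto
  have "{(p1, q1), (p2, q2)} \<subseteq> Psi n ` set e" using e(6,7) Psi_RR[OF a] Psi_RR[OF b] by force
  from S_path[OF S n e(1,4,5,2) _ this] e(3)
  have "(\<Sum>a\<in>{(p1, q1), (p2, q2)}. real_of_int (p a)) \<le> real (dyck_bound n (omega k) (map (Psi n) e))" by auto
  also have "\<dots> \<le> 1" using bound_anti[OF e(1,5,2,3) kn] by auto
  finally show False using ne v by simp
qed

lemma S_good:
  assumes n: "1 \<le> n" "k \<le> n" and S: "p \<in> fflv_S n (omega k)"
  shows "good n k p"
  unfolding good_def
proof (intro conjI allI impI)
  fix a assume "a \<notin> Gs n k"
  then show "p a = 0"
    using S_basic(1)[OF S] S_zero_big[OF S n(1) _ _ n(2)] S_zero_small[OF S n(1) _ _ n(2)]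
    unfolding Gs_def by (cases a) (metis (mono_tags, lifting) fst_conv mem_Collect_eq not_le snd_conv)
next
  fix a
  show "p a = 0 \<or> p a = 1"
  proof (cases "a \<in> posroots n")
    case True
    then show ?thesis using S_basic(2)[OF S True] S_le1[OF S n(1) _ n(2), of "fst a" "snd a"] by auto
  next
    case False
    then show ?thesis using S_basic(1)[OF S] by auto
  qed
next
  fix a b assume ab: "p a = 1" "p b = 1" "a \<noteq> b" "fst a \<le> fst b" "snd a \<le> snd b"
  have "a \<in> posroots n" using ab(1) S_basic(1)[OF S] by (metis zero_neq_one)
  moreover have "b \<in> posroots n" using ab(2) S_basic(1)[OF S] by (metis zero_neq_one)
  ultimately show False using S_anti[OF S n(1), of "fst a" "snd a" "fst b" "snd b"] ab n(2) by auto
qed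

lemma S_iff:
  assumes "1 \<le> n" "k \<le> n"
  shows "p \<in> fflv_S n (omega k) \<longleftrightarrow> good n k p"
  using S_good good_in_S assms by blast


definition colval :: "nat \<Rightarrow> (nat \<times> nat \<Rightarrow> int) \<Rightarrow> nat \<Rightarrow> nat" where
  "colval n p i = (if \<exists>q. p (i, q) = 1 then RR n (SOME q. p (i, q) = 1) else i)"

definition FF :: "nat \<Rightarrow> nat \<Rightarrow> (nat \<times> nat \<Rightarrow> int) \<Rightarrow> nat list" where
  "FF n k p = map (colval n p) [1..<k+1]"

definition GI :: "nat \<Rightarrow> nat \<Rightarrow> nat list \<Rightarrow> nat \<times> nat \<Rightarrow> int" where
  "GI n k T = (\<lambda>a. if a \<in> posroots n \<and> fst a \<in> {1..k} \<and> T ! (fst a - 1) \<noteq> fst a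
      \<and> RR n (snd a) = T ! (fst a - 1) then 1 else 0)"

lemma good_G: "good n k p \<Longrightarrow> p a = 1 \<Longrightarrow> a \<in> Gs n k"
  unfolding good_def by (metis zero_neq_one)

lemma good_anti: "good n k p \<Longrightarrow> p a = 1 \<Longrightarrow> p b = 1 \<Longrightarrow> fst a \<le> fst b \<Longrightarrow> snd a \<le> snd b \<Longrightarrow> a = b"
  unfolding good_def by blast

lemma good_uniq: "good n k p \<Longrightarrow> p (i, q) = 1 \<Longrightarrow> p (i, q') = 1 \<Longrightarrow> q = q'"
  using good_anti[of n k p "(i, q)" "(i, q')"] good_anti[of n k p "(i, q')" "(i, q)"]
  by (cases "q \<le> q'") auto

lemma colval_some: "good n k p \<Longrightarrow> p (i, q) = 1 \<Longrightarrow> colval n p i = RR n q"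
  unfolding colval_def
  by (metis (mono_tags, lifting) good_uniq someI_ex)

lemma colval_none: "\<not> (\<exists>q. p (i, q) = 1) \<Longrightarrow> colval n p i = i"
  unfolding colval_def by simp

lemma Gs_facts:
  assumes "(i, q) \<in> Gs n k" "k \<le> n"
  shows "1 \<le> i" "i \<le> k" "k < RR n q" "RR n q + i \<le> 2 * n + 1" "q \<noteq> n + 1" "(i, q) \<in> posroots n"
  using assms by (auto simp: Gs_def posroots_iff RR_def)

lemma FF_nth: "i \<in> {1..k} \<Longrightarrow> FF n k p ! (i - 1) = colval n p i"
proof -
  assume i: "i \<in> {1..k}"
  then have "i - 1 < length [1..<k+1]" by auto
  then show ?thesis unfolding FF_def using i by (simp del: upt_Suc)
qed

lemma length_FF: "length (FF n k p) = k" unfolding FF_def by simp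

lemma colval_range:
  assumes g: "good n k p" and kn: "k \<le> n" and i: "i \<in> {1..k}"
  shows "colval n p i \<in> {1..2 * n} \<and> colval n p i + i \<le> 2 * n + 1"
proof (cases "\<exists>q. p (i, q) = 1")
  case True
  then obtain q where q: "p (i, q) = 1" by auto
  note G = Gs_facts[OF good_G[OF g q] kn]
  show ?thesis using colval_some[OF g q] G by auto
next
  case False
  then show ?thesis using colval_none[OF False] i kn by auto
qed

lemma FF_col:
  assumes n: "1 \<le> n" "k \<le> n" and g: "good n k p"
  shows "pbw_column n k (FF n k p)"
  unfolding pbw_column_def
proof (intro conjI ballI impI)
  show "length (FF n k p) = k" by (rule length_FF)
next
  fix i assume i: "i \<in> {1..k}"
  then show "FF n k p ! (i - 1) \<in> {1..2 * n}" using colval_range[OF g n(2) i] FF_nth[OF i] by auto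
next
  fix i assume i: "i \<in> {1..k}" and le: "FF n k p ! (i - 1) \<le> k"
  show "FF n k p ! (i - 1) = i"
  proof (cases "\<exists>q. p (i, q) = 1")
    case True
    then obtain q where q: "p (i, q) = 1" by auto
    note G = Gs_facts[OF good_G[OF g q] n(2)]
    then show ?thesis using colval_some[OF g q] le FF_nth[OF i] by auto
  next
    case False
    then show ?thesis using colval_none[OF False] FF_nth[OF i] by auto
  qed
next
  fix i1 i2 assume i: "i1 \<in> {1..k}" "i2 \<in> {1..k}" and c: "i1 < i2 \<and> FF n k p ! (i1 - 1) \<noteq> i1"
  have "\<exists>q. p (i1, q) = 1" using c colval_none FF_nth[OF i(1)] by metis
  then obtain q1 where q1: "p (i1, q1) = 1" by auto
  note G1 = Gs_facts[OF good_G[OF g q1] n(2)]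
  show "FF n k p ! (i1 - 1) > FF n k p ! (i2 - 1)"
  proof (cases "\<exists>q. p (i2, q) = 1")
    case True
    then obtain q2 where q2: "p (i2, q2) = 1" by auto
    note G2 = Gs_facts[OF good_G[OF g q2] n(2)]
    have "\<not> q1 \<le> q2" using good_anti[OF g q1 q2] c by auto
    then have "RR n q2 < RR n q1" using RR_less_iff[OF G2(5) G1(5)] by auto
    then show ?thesis using colval_some[OF g q1] colval_some[OF g q2] FF_nth[OF i(1)] FF_nth[OF i(2)] by auto
  next
    case False
    then show ?thesis using colval_none[OF False] colval_some[OF g q1] FF_nth[OF i(1)] FF_nth[OF i(2)] G1 i
      by auto
  qed
next
  fix i i' assume i: "i \<in> {1..k}" "i' \<in> {1..k}"
    and c: "i < k \<and> FF n k p ! (i - 1) = i \<and> FF n k p ! (i' - 1) = sbar n i"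
  have noq: "\<not> (\<exists>q. p (i, q) = 1)"
  proof
    assume "\<exists>q. p (i, q) = 1"
    then obtain q where q: "p (i, q) = 1" by auto
    note G = Gs_facts[OF good_G[OF g q] n(2)]
    then show False using colval_some[OF g q] c FF_nth[OF i(1)] i by auto
  qed
  have "\<exists>q. p (i', q) = 1"
  proof (rule ccontr)
    assume "\<not> (\<exists>q. p (i', q) = 1)"
    then have "FF n k p ! (i' - 1) = i'" using colval_none FF_nth[OF i(2)] by metis
    then show False using c i n by (auto simp: sbar_def)
  qed
  then obtain q where q: "p (i', q) = 1" by auto
  note G = Gs_facts[OF good_G[OF g q] n(2)]
  have "RR n q = 2 * n + 1 - i" using colval_some[OF g q] c FF_nth[OF i(2)] by (simp add: sbar_def)
  then have "i' \<le> i" using G i by auto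
  moreover have "i' \<noteq> i" using noq q by auto
  ultimately show "i' < i" by simp
qed


lemma pbw_key:
  assumes T: "pbw_column n k T" and kn: "k \<le> n" and i: "i \<in> {1..k}"
  shows "T ! (i - 1) + i \<le> 2 * n + 1"
  using i
proof (induction i rule: less_induct)
  case (less i)
  have rng: "\<And>i. i \<in> {1..k} \<Longrightarrow> T ! (i - 1) \<in> {1..2 * n}" using T unfolding pbw_column_def by blast
  have fix_: "\<And>i. i \<in> {1..k} \<Longrightarrow> T ! (i - 1) \<le> k \<Longrightarrow> T ! (i - 1) = i"
    using T unfolding pbw_column_def by blast
  have dec: "\<And>i1 i2. i1 \<in> {1..k} \<Longrightarrow> i2 \<in> {1..k} \<Longrightarrow> i1 < i2 \<Longrightarrow> T ! (i1 - 1) \<noteq> i1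
      \<Longrightarrow> T ! (i1 - 1) > T ! (i2 - 1)"
    using T unfolding pbw_column_def by blast
  have c3: "\<And>i i'. i \<in> {1..k} \<Longrightarrow> i' \<in> {1..k} \<Longrightarrow> i < k \<Longrightarrow> T ! (i - 1) = i
      \<Longrightarrow> T ! (i' - 1) = sbar n i \<Longrightarrow> i' < i"
    using T unfolding pbw_column_def by blast
  show ?case
  proof (rule ccontr)
    assume bad: "\<not> T ! (i - 1) + i \<le> 2 * n + 1"
    define j where "j = 2 * n + 1 - T ! (i - 1)"
    have ti: "T ! (i - 1) \<in> {1..2 * n}" using rng less.prems .
    have j: "1 \<le> j" "j < i" "j \<in> {1..k}" "j < k" using ti bad less.prems unfolding j_def by auto
    have tij: "T ! (i - 1) = sbar n j" using ti unfolding j_def sbar_def by auto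
    show False
    proof (cases "T ! (j - 1) = j")
      case True
      then show False using c3[OF j(3) less.prems j(4) True tij] j by simp
    next
      case False
      have "T ! (j - 1) > T ! (i - 1)" using dec[OF j(3) less.prems j(2) False] .
      moreover have "T ! (j - 1) + j \<le> 2 * n + 1" using less.IH[OF j(2) j(3)] .
      ultimately show False using tij unfolding sbar_def by auto
    qed
  qed
qed

lemma GI_good:
  assumes T: "pbw_column n k T" and kn: "k \<le> n"
  shows "good n k (GI n k T)"
  unfolding good_def
proof (intro conjI allI impI)
  have fix_: "\<And>i. i \<in> {1..k} \<Longrightarrow> T ! (i - 1) \<le> k \<Longrightarrow> T ! (i - 1) = i"
    using T unfolding pbw_column_def by blast
  have dec: "\<And>i1 i2. i1 \<in> {1..k} \<Longrightarrow> i2 \<in> {1..k} \<Longrightarrow> i1 < i2 \<Longrightarrow> T ! (i1 - 1) \<noteq> i1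
      \<Longrightarrow> T ! (i1 - 1) > T ! (i2 - 1)"
    using T unfolding pbw_column_def by blast
  {
    fix a assume a: "a \<notin> Gs n k"
    show "GI n k T a = 0"
    proof (rule ccontr)
      assume "GI n k T a \<noteq> 0"
      then have h: "a \<in> posroots n" "fst a \<in> {1..k}" "T ! (fst a - 1) \<noteq> fst a" "RR n (snd a) = T ! (fst a - 1)"
        unfolding GI_def by (auto split: if_splits)
      have "T ! (fst a - 1) > k" using fix_[OF h(2)] h(3) by force
      then have "k \<le> snd a" using h(4) kn by (auto simp: RR_def split: if_splits)
      then show False using a h unfolding Gs_def by auto
    qed
  }
  fix a show "GI n k T a = 0 \<or> GI n k T a = 1" unfolding GI_def by auto
next
  have dec: "\<And>i1 i2. i1 \<in> {1..k} \<Longrightarrow> i2 \<in> {1..k} \<Longrightarrow> i1 < i2 \<Longrightarrow> T ! (i1 - 1) \<noteq> i1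
      \<Longrightarrow> T ! (i1 - 1) > T ! (i2 - 1)"
    using T unfolding pbw_column_def by blast
  fix a b assume ab: "GI n k T a = 1" "GI n k T b = 1" "a \<noteq> b" "fst a \<le> fst b" "snd a \<le> snd b"
  then have ha: "a \<in> posroots n" "fst a \<in> {1..k}" "T ! (fst a - 1) \<noteq> fst a" "RR n (snd a) = T ! (fst a - 1)"
    and hb: "b \<in> posroots n" "fst b \<in> {1..k}" "T ! (fst b - 1) \<noteq> fst b" "RR n (snd b) = T ! (fst b - 1)"
    unfolding GI_def by (auto split: if_splits)
  have na: "snd a \<noteq> n + 1" and nb: "snd b \<noteq> n + 1" using ha(1) hb(1) posroots_iff
    by (metis prod.collapse)+
  show False
  proof (cases "fst a = fst b")
    case True
    then have "snd a = snd b" using ha(4) hb(4) RR_inj[OF na nb] by simp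
    then show False using True ab(3) by (simp add: prod_eq_iff)
  next
    case False
    then have "T ! (fst a - 1) > T ! (fst b - 1)" using dec[OF ha(2) hb(2) _ ha(3)] ab(4) by simp
    then show False using RR_mono[OF ab(5), of n] ha(4) hb(4) by simp
  qed
qed


lemma FF_GI:
  assumes T: "pbw_column n k T" and kn: "k \<le> n"
  shows "FF n k (GI n k T) = T"
proof (rule nth_equalityI)
  have len: "length T = k" using T unfolding pbw_column_def by blast
  then show "length (FF n k (GI n k T)) = length T" by (simp add: length_FF)
  fix m assume "m < length (FF n k (GI n k T))"
  then have m: "m < k" by (simp add: length_FF)
  define i where "i = m + 1"
  have i: "i \<in> {1..k}" and mi: "m = i - 1" using m unfolding i_def by auto
  have fix_: "T ! (i - 1) \<le> k \<Longrightarrow> T ! (i - 1) = i"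
    using T i unfolding pbw_column_def by blast
  have rng: "T ! (i - 1) \<in> {1..2 * n}" using T i unfolding pbw_column_def by blast
  have g: "good n k (GI n k T)" by (rule GI_good[OF T kn])
  show "FF n k (GI n k T) ! m = T ! m"
  proof (cases "T ! (i - 1) = i")
    case True
    have "\<not> (\<exists>q. GI n k T (i, q) = 1)" using True unfolding GI_def by auto
    then show ?thesis using colval_none FF_nth[OF i] True mi by metis
  next
    case False
    have gt: "T ! (i - 1) > k" using fix_ False by force
    have reg: "(i, T ! (i - 1)) \<in> Reg n" using pbw_key[OF T kn i] gt i by (auto simp: Reg_def)
    define q where "q = QQ n (T ! (i - 1))"
    have pr: "(i, q) \<in> posroots n" using Psi_in[OF reg] unfolding Psi_def q_def by simp
    have rq: "RR n q = T ! (i - 1)" using RR_Psi[OF reg] unfolding Psi_def q_def by simp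
    have "GI n k T (i, q) = 1" unfolding GI_def using pr i False rq by auto
    then show ?thesis using colval_some[OF g] FF_nth[OF i] rq mi by metis
  qed
qed

lemma GI_FF:
  assumes n: "1 \<le> n" "k \<le> n" and g: "good n k p"
  shows "GI n k (FF n k p) = p"
proof
  fix a :: "nat \<times> nat"
  obtain i q where a: "a = (i, q)" by fastforce
  have pv: "p a = 0 \<or> p a = 1" using g unfolding good_def by blast
  show "GI n k (FF n k p) a = p a"
  proof (cases "p a = 1")
    case True
    note G = Gs_facts[OF good_G[OF g True[unfolded a]] n(2)]
    have i: "i \<in> {1..k}" using G by auto
    have "FF n k p ! (i - 1) = RR n q" using colval_some[OF g True[unfolded a]] FF_nth[OF i] by simp
    then show ?thesis using True G i a unfolding GI_def by auto
  next
    case False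
    then have p0: "p a = 0" using pv by simp
    show ?thesis
    proof (rule ccontr)
      assume "GI n k (FF n k p) a \<noteq> p a"
      then have h: "a \<in> posroots n" "i \<in> {1..k}" "FF n k p ! (i - 1) \<noteq> i" "RR n q = FF n k p ! (i - 1)"
        using p0 a unfolding GI_def by (auto split: if_splits)
      have "\<exists>q. p (i, q) = 1" using h(3) colval_none FF_nth[OF h(2)] by metis
      then obtain q' where q': "p (i, q') = 1" by auto
      note G = Gs_facts[OF good_G[OF g q'] n(2)]
      have "RR n q = RR n q'" using h(4) colval_some[OF g q'] FF_nth[OF h(2)] by simp
      moreover have "q \<noteq> n + 1" using h(1) a posroots_iff by simp
      ultimately have "q = q'" using RR_inj G(5) by blast
      then show False using q' p0 a by simp
    qed
  qed
qed


lemma rootvec_in: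
  assumes "(i, q) \<in> posroots n" "1 \<le> l" "l \<le> n"
  shows "rootvec n (i, q) l = (if i = l then 1 else 0) - (if RR n q = l then 1 else 0)
     + (if RR n q = 2 * n + 1 - l then 1 else 0)"
proof -
  have q: "q \<noteq> n + 1" "q \<le> 2 * n" using assms(1) unfolding posroots_iff RR_def by (auto split: if_splits)
  consider "q < n" | "q = n" | "q > n + 1" using q by linarith
  then show ?thesis
  proof cases
    case 1 then show ?thesis using assms(2,3) unfolding rootvec_def eps_def RR_def by auto
  next
    case 2 then show ?thesis using assms(2,3) unfolding rootvec_def eps_def RR_def by auto
  next
    case 3 then show ?thesis using assms(2,3) q unfolding rootvec_def eps_def RR_def sbar_def by auto
  qed
qed

lemma rootvec_out:
  assumes "(i, q) \<in> posroots n" "\<not> (1 \<le> l \<and> l \<le> n)"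
  shows "rootvec n (i, q) l = 0"
  using assms unfolding rootvec_def eps_def sbar_def posroots_iff
  by (auto simp: RR_def split: if_splits)

lemma sum_ind:
  assumes "inj_on h A" and fin: "finite A"
  shows "(\<Sum>a\<in>A. (if h a = c then 1 else 0 :: int)) = (if c \<in> h ` A then 1 else 0)"
proof -
  have "(\<Sum>a\<in>A. (if h a = c then 1 else 0 :: int)) = (\<Sum>y\<in>h ` A. (if y = c then 1 else 0))"
    using sum.reindex[OF assms(1), of "\<lambda>y. if y = c then 1 else 0 :: int"] by simp
  also have "\<dots> = (if c \<in> h ` A then 1 else 0)"
    using fin by (simp add: sum.delta)
  finally show ?thesis .
qed

lemma hw_omega: "1 \<le> l \<Longrightarrow> l \<le> n \<Longrightarrow> k \<le> n \<Longrightarrow> hw n (omega k) l = (if l \<le> k then 1 else 0)"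
proof -
  assume a: "1 \<le> l" "l \<le> n" "k \<le> n"
  have "(\<Sum>t = l..n. int (omega k t)) = int (\<Sum>t = l..n. omega k t)" by (simp add: of_nat_sum)
  then show ?thesis using a unfolding hw_def by (simp add: sum_omega)
qed

lemma set_FF: "set (FF n k p) = colval n p ` {1..k}"
  unfolding FF_def set_map set_upt by (simp add: atLeastLessThanSuc_atLeastAtMost)

lemma weight_eq:
  assumes n: "1 \<le> n" "k \<le> n" and g: "good n k p"
  shows "tableau_weight n (FF n k p) = fflv_weight n (omega k) p"
proof
  fix l
  define A where "A = {a \<in> posroots n. p a = 1}"
  define P where "P = fst ` A"
  define B where "B = (\<lambda>a. RR n (snd a)) ` A"
  have finA: "finite A" unfolding A_def using finite_posroots by simp
  have AG: "\<And>a. a \<in> A \<Longrightarrow> a \<in> Gs n k" unfolding A_def using good_G[OF g] by blast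
  have pv: "\<And>a. p a = 0 \<or> p a = 1" using g unfolding good_def by blast
  have injP: "inj_on fst A"
  proof (rule inj_onI)
    fix a b assume ab: "a \<in> A" "b \<in> A" "fst a = fst b"
    have "p a = 1" "p b = 1" using ab unfolding A_def by auto
    have e: "(fst a, snd b) = b" using ab(3) by (metis prod.collapse)
    have "p (fst a, snd a) = 1" "p (fst a, snd b) = 1" using \<open>p a = 1\<close> \<open>p b = 1\<close> by (simp, simp only: e)
    then have "snd a = snd b" using good_uniq[OF g] by blast
    then show "a = b" using ab(3) by (simp add: prod_eq_iff)
  qed
  have injB: "inj_on (\<lambda>a. RR n (snd a)) A"
  proof (rule inj_onI)
    fix a b assume ab: "a \<in> A" "b \<in> A" "RR n (snd a) = RR n (snd b)"
    have "(fst a, snd a) \<in> Gs n k" "(fst b, snd b) \<in> Gs n k" using AG[OF ab(1)] AG[OF ab(2)] by simp_all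
    then have "snd a \<noteq> n + 1" "snd b \<noteq> n + 1" using Gs_facts(5)[OF _ n(2)] by blast+
    then have s: "snd a = snd b" using ab(3) RR_inj by blast
    have "p a = 1" "p b = 1" using ab unfolding A_def by auto
    then show "a = b" using good_anti[OF g, of a b] good_anti[OF g, of b a] s
      by (cases "fst a \<le> fst b") auto
  qed
  have Pk: "1 \<le> x \<and> x \<le> k" if xP: "x \<in> P" for x
  proof -
    obtain a where a: "a \<in> A" "x = fst a" using xP unfolding P_def by blast
    have "(fst a, snd a) \<in> Gs n k" using AG[OF a(1)] by simp
    then show ?thesis using Gs_facts(1,2)[OF _ n(2)] a(2) by blast
  qed
  have Bk: "k < x" if xB: "x \<in> B" for x
  proof -
    obtain a where a: "a \<in> A" "x = RR n (snd a)" using xB unfolding B_def by blast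
    have "(fst a, snd a) \<in> Gs n k" using AG[OF a(1)] by simp
    then show ?thesis using Gs_facts(3)[OF _ n(2)] a(2) by blast
  qed
  have setT: "\<And>x. x \<in> set (FF n k p) \<longleftrightarrow> (x \<in> {1..k} \<and> x \<notin> P) \<or> x \<in> B"
  proof
    fix x assume "x \<in> set (FF n k p)"
    then obtain i where i: "i \<in> {1..k}" "x = colval n p i" unfolding set_FF by auto
    show "(x \<in> {1..k} \<and> x \<notin> P) \<or> x \<in> B"
    proof (cases "\<exists>q. p (i, q) = 1")
      case True
      then obtain q where q: "p (i, q) = 1" by auto
      have "(i, q) \<in> A" using q good_G[OF g q] unfolding A_def Gs_def by auto
      then show ?thesis using colval_some[OF g q] i unfolding B_def by force
    next
      case False
      have "i \<notin> P"
      proof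
        assume "i \<in> P"
        then obtain a where a: "a \<in> A" "fst a = i" unfolding P_def by blast
        have "(i, snd a) = a" using a(2) by auto
        moreover have "p a = 1" using a(1) unfolding A_def by simp
        ultimately show False using False by metis
      qed
      then show ?thesis using colval_none[OF False] i by auto
    qed
  next
    fix x assume x: "(x \<in> {1..k} \<and> x \<notin> P) \<or> x \<in> B"
    have mem: "\<And>i. i \<in> {1..k} \<Longrightarrow> colval n p i \<in> set (FF n k p)" unfolding set_FF by auto
    show "x \<in> set (FF n k p)"
    proof (cases "x \<in> B")
      case True
      then obtain a where a: "a \<in> A" "x = RR n (snd a)" unfolding B_def by blast
      obtain i q where iq: "a = (i, q)" by fastforce
      have "p (i, q) = 1" using a iq unfolding A_def by auto
      moreover have "i \<in> {1..k}" using Gs_facts[OF AG[OF a(1)[unfolded iq]] n(2)] by auto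
      ultimately show ?thesis using colval_some[OF g, of i q] mem[of i] a(2) iq by simp
    next
      case False
      then have xk: "x \<in> {1..k}" "x \<notin> P" using x by auto
      have "\<not> (\<exists>q. p (x, q) = 1)"
      proof
        assume "\<exists>q. p (x, q) = 1"
        then obtain q where q: "p (x, q) = 1" by auto
        then have "(x, q) \<in> A" using good_G[OF g q] unfolding A_def Gs_def by auto
        then have "fst (x, q) \<in> P" unfolding P_def by (rule imageI)
        then show False using xk by simp
      qed
      then show ?thesis using colval_none[of p x n] mem[OF xk(1)] by simp
    qed
  qed
  have sumA: "(\<Sum>a\<in>posroots n. p a * rootvec n a l) = (\<Sum>a\<in>A. rootvec n a l)"
  proof -
    have "(\<Sum>a\<in>posroots n. p a * rootvec n a l) = (\<Sum>a\<in>posroots n. if p a = 1 then rootvec n a l else 0)"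
      by (rule sum.cong) (use pv in auto)
    also have "\<dots> = (\<Sum>a\<in>A. rootvec n a l)" unfolding A_def
      by (rule sum.inter_filter[symmetric]) (rule finite_posroots)
    finally show ?thesis .
  qed
  show "tableau_weight n (FF n k p) l = fflv_weight n (omega k) p l"
  proof (cases "1 \<le> l \<and> l \<le> n")
    case True
    have "(\<Sum>a\<in>A. rootvec n a l) = (\<Sum>a\<in>A. (if fst a = l then 1 else 0) - (if RR n (snd a) = l then 1 else 0)
       + (if RR n (snd a) = 2 * n + 1 - l then 1 else 0))"
      apply (rule sum.cong, simp)
      subgoal for a using rootvec_in[of "fst a" "snd a" n l] True unfolding A_def by auto
      done
    also have "\<dots> = (if l \<in> P then 1 else 0) - (if l \<in> B then 1 else 0) + (if 2 * n + 1 - l \<in> B then 1 else 0)"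
      unfolding sum.distrib sum_subtractf P_def B_def
      using sum_ind[OF injP finA] sum_ind[OF injB finA] by simp
    finally have s: "(\<Sum>a\<in>A. rootvec n a l) = \<dots>" .
    have w: "fflv_weight n (omega k) p l = (if l \<le> k then 1 else 0) -
       ((if l \<in> P then 1 else 0) - (if l \<in> B then 1 else 0) + (if 2 * n + 1 - l \<in> B then 1 else 0))"
      unfolding fflv_weight_def using sumA s hw_omega[of l n k] True n by simp
    have t: "tableau_weight n (FF n k p) l = (if l \<in> set (FF n k p) then 1 else 0)
       - (if 2 * n + 1 - l \<in> set (FF n k p) then 1 else 0)"
      unfolding tableau_weight_def sbar_def using True by simp
    have e1: "2 * n + 1 - l \<in> set (FF n k p) \<longleftrightarrow> 2 * n + 1 - l \<in> B" using setT[of "2 * n + 1 - l"] True n by auto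
    have pl: "l \<in> P \<Longrightarrow> l \<le> k" using Pk[of l] by simp
    have bl: "l \<in> B \<Longrightarrow> k < l" using Bk[of l] by simp
    show ?thesis unfolding t w e1 setT[of l] using True
      by (cases "l \<in> P"; cases "l \<in> B"; cases "l \<le> k"; cases "2 * n + 1 - l \<in> B") (use pl bl in auto)
  next
    case False
    have "(\<Sum>a\<in>A. rootvec n a l) = 0"
    proof (rule sum.neutral, rule ballI)
      fix a assume "a \<in> A"
      then have "(fst a, snd a) \<in> posroots n" unfolding A_def by simp
      then show "rootvec n a l = 0" using rootvec_out[OF _ False, of "fst a" "snd a"] by simp
    qed
    then show ?thesis using sumA False unfolding tableau_weight_def fflv_weight_def hw_def by auto
  qed
qed

theorem proposition3p8:
  fixes n k :: nat
  assumes "1 \<le> n" and "1 \<le> k" and "k \<le> n"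
  shows "\<exists>f. bij_betw f (fflv_S n (omega k)) (pbw_columns n k)
           \<and> (\<forall>p \<in> fflv_S n (omega k). tableau_weight n (f p) = fflv_weight n (omega k) p)"
proof (intro exI conjI ballI)
  note n = assms(1,3)
  show "bij_betw (FF n k) (fflv_S n (omega k)) (pbw_columns n k)"
  proof (rule bij_betw_byWitness[where f' = "GI n k"])
    show "\<forall>a\<in>fflv_S n (omega k). GI n k (FF n k a) = a" using GI_FF[OF n] S_iff[OF n] by blast
    show "\<forall>a'\<in>pbw_columns n k. FF n k (GI n k a') = a'" using FF_GI n unfolding pbw_columns_def by blast
    show "FF n k ` fflv_S n (omega k) \<subseteq> pbw_columns n k"
      using FF_col[OF n] S_iff[OF n] unfolding pbw_columns_def by blast
    show "GI n k ` pbw_columns n k \<subseteq> fflv_S n (omega k)"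
      using GI_good n S_iff[OF n] unfolding pbw_columns_def by blast
  qed
  fix p assume "p \<in> fflv_S n (omega k)"
  then show "tableau_weight n (FF n k p) = fflv_weight n (omega k) p"
    using weight_eq[OF n] S_iff[OF n] by blast
qed

end
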